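(* The linear map $\Theta:\mathbf{H}_\mathrm{Pack}\to\mathbf{H}_{\mathrm{Pack}_1}$ defined by $\Theta(M)=\mathrm{Comp}(M)$ for $M\in\mathrm{Pack}$ is a bialgebra morphism from $(\mathbf{H}_\mathrm{Pack},\searrow,\blacktriangle)$ to $(\mathbf{H}_{\mathrm{Pack}_1},\rightarrow,\blacktriangle)$.
   Context: A packed matrix is a matrix with entries in $\mathbb{N}$ with no zero row and no zero column (the empty matrix $1$, with $0$ rows and columns, is packed); $\mathrm{Pack}$ is their set and $\mathbf{H}_\mathrm{Pack}$ the $\mathbb{Q}$-vector space with basis $\mathrm{Pack}$. $\mathcal{M}_{k,l}(\mathbb{N})$ denotes $k\times l$ matrices over $\mathbb{N}$; $p(M)$ is obtained from $M$ by deleting zero rows and columns. On $\mathbf{H}_\mathrm{Pack}$: $M\searrow M'=\begin{pmatrix}M&0\\0&M'\end{pmatrix}$ and, for $M$ with $k$ rows and $l$ columns, $\blacktriangle(M)=\sum_{M',M''\in\mathcal{M}_{k,l}(\mathbb{N}),\ M'+M''=M}p(M')\otimes p(M'')$, $\blacktriangle(1)=1\otimes1$. $\mathrm{Pack}_1$ is the set of packed row matrices $(a_1\ \cdots\ a_l)$, $a_i\geq1$, together with $1$; $\mathbf{H}_{\mathrm{Pack}_1}$ is the $\mathbb{Q}$-vector space with basis $\mathrm{Pack}_1$, with product concatenation $(a_1\cdots a_l)\rightarrow(b_1\cdots b_m)=(a_1\cdots a_lb_1\cdots b_m)$ and coproduct $\blacktriangle(M)=\sum_{M',M''\in\mathcal{M}_{1,l}(\mathbb{N}),\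 M'+M''=M}p(M')\otimes p(M'')$ (this is the Hopf algebra of noncommutative symmetric functions). For $M=(m_{i,j})$ with $k$ rows and $l$ columns, $\mathrm{Comp}(M)$ is the packed row matrix obtained by deleting the zeros from the sequence $(m_{1,1},\dots,m_{1,l},m_{2,1},\dots,m_{k,l})$ (reading the rows in order); $\mathrm{Comp}(1)=1$. *)

theory Defs
  imports Complex_Main
begin

text \<open>A matrix is a list of rows. A k x l matrix has k rows, each of length l.
  The empty matrix 1 is the empty list.\<close>

type_synonym mat = "nat list list"

definition ncols :: "mat \<Rightarrow> nat" where
  "ncols M = (case M of [] \<Rightarrow> 0 | r # _ \<Rightarrow> length r)"

definition is_mat :: "nat \<Rightarrow> nat \<Rightarrow> mat \<Rightarrow> bool" where
  "is_mat k l M \<longleftrightarrow> length M = k \<and> (\<forall>r\<in>set M. length r = l)"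

definition nonzero_row :: "nat list \<Rightarrow> bool" where
  "nonzero_row r \<longleftrightarrow> (\<exists>x\<in>set r. x \<noteq> 0)"

definition packed :: "mat \<Rightarrow> bool" where
  "packed M \<longleftrightarrow> is_mat (length M) (ncols M) M
     \<and> (\<forall>r\<in>set M. nonzero_row r)
     \<and> (\<forall>j<ncols M. \<exists>r\<in>set M. r ! j \<noteq> 0)"

definition packed1 :: "mat \<Rightarrow> bool" where
  "packed1 M \<longleftrightarrow> packed M \<and> length M \<le> 1"

text \<open>p(M): delete zero rows and zero columns.\<close>
definition pk :: "mat \<Rightarrow> mat" where
  "pk M = map (\<lambda>r. nths r {j. \<exists>r'\<in>set M. j < length r' \<and> r' ! j \<noteq> 0})
             (filter nonzero_row M)"

definition dsum :: "mat \<Rightarrow> mat \<Rightarrow> mat" where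
  "dsum M M' = map (\<lambda>r. r @ replicate (ncols M') 0) M
             @ map (\<lambda>r. replicate (ncols M) 0 @ r) M'"

definition conc :: "mat \<Rightarrow> mat \<Rightarrow> mat" where
  "conc A B = (if A = [] then B else if B = [] then A else [hd A @ hd B])"

definition Comp :: "mat \<Rightarrow> mat" where
  "Comp M = (let s = filter (\<lambda>x. x \<noteq> 0) (concat M) in if s = [] then [] else [s])"

definition decomp :: "mat \<Rightarrow> (mat \<times> mat) set" where
  "decomp M = {(A, B). is_mat (length M) (ncols M) A \<and> is_mat (length M) (ncols M) B
       \<and> (\<forall>i<length M. \<forall>j<ncols M. A ! i ! j + B ! i ! j = M ! i ! j)}"

text \<open>Elements of the Q-vector space with basis a set S of objects of type 'a are
  finitely supported coefficient functions 'a \<Rightarrow> rat supported in S.  The tensor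
  product of two such spaces has the products of basis elements as basis.\<close>

definition supp :: "('a \<Rightarrow> rat) \<Rightarrow> 'a set" where
  "supp x = {a. x a \<noteq> 0}"

definition vspace :: "('a \<Rightarrow> bool) \<Rightarrow> ('a \<Rightarrow> rat) set" where
  "vspace B = {x. finite (supp x) \<and> (\<forall>a. x a \<noteq> 0 \<longrightarrow> B a)}"

definition delta :: "'a \<Rightarrow> 'a \<Rightarrow> rat" where
  "delta a = (\<lambda>b. if b = a then 1 else 0)"

definition lin_ext :: "('a \<Rightarrow> 'b \<Rightarrow> rat) \<Rightarrow> ('a \<Rightarrow> rat) \<Rightarrow> 'b \<Rightarrow> rat" where
  "lin_ext f x = (\<lambda>b. \<Sum>a\<in>supp x. x a * f a b)"

definition bilin_ext :: "('a \<Rightarrow> 'a \<Rightarrow> 'a) \<Rightarrow> ('a \<Rightarrow> rat) \<Rightarrow> ('a \<Rightarrow> rat) \<Rightarrow> 'a \<Rightarrow> rat" where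
  "bilin_ext m x y = (\<lambda>c. \<Sum>a\<in>supp x. \<Sum>b\<in>supp y. x a * y b * delta (m a b) c)"

definition tensor_map :: "('a \<Rightarrow> 'b \<Rightarrow> rat) \<Rightarrow> ('a \<Rightarrow> 'b \<Rightarrow> rat)
    \<Rightarrow> ('a \<times> 'a \<Rightarrow> rat) \<Rightarrow> ('b \<times> 'b \<Rightarrow> rat)" where
  "tensor_map f g = lin_ext (\<lambda>(a, a'). \<lambda>(b, b'). f a b * g a' b')"

text \<open>Coproduct on a basis matrix: sum over decompositions of p(M') \<otimes> p(M'').
  For row matrices (k = 1) and for 1 this is literally the coproduct of H_{Pack_1}.\<close>
definition cop_basis :: "mat \<Rightarrow> mat \<times> mat \<Rightarrow> rat" where
  "cop_basis M = (\<lambda>t. \<Sum>(A, B)\<in>decomp M. delta (pk A, pk B) t)"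

definition HPack :: "(mat \<Rightarrow> rat) set" where "HPack = vspace packed"
definition HPack1 :: "(mat \<Rightarrow> rat) set" where "HPack1 = vspace packed1"

definition prodPack :: "(mat \<Rightarrow> rat) \<Rightarrow> (mat \<Rightarrow> rat) \<Rightarrow> mat \<Rightarrow> rat" where
  "prodPack = bilin_ext dsum"
definition prodPack1 :: "(mat \<Rightarrow> rat) \<Rightarrow> (mat \<Rightarrow> rat) \<Rightarrow> mat \<Rightarrow> rat" where
  "prodPack1 = bilin_ext conc"

definition copPack :: "(mat \<Rightarrow> rat) \<Rightarrow> mat \<times> mat \<Rightarrow> rat" where
  "copPack = lin_ext cop_basis"
definition copPack1 :: "(mat \<Rightarrow> rat) \<Rightarrow> mat \<times> mat \<Rightarrow> rat" where
  "copPack1 = lin_ext cop_basis"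

definition unit_elt :: "mat \<Rightarrow> rat" where "unit_elt = delta []"
definition counit :: "(mat \<Rightarrow> rat) \<Rightarrow> rat" where "counit x = x []"

definition Theta_basis :: "mat \<Rightarrow> mat \<Rightarrow> rat" where
  "Theta_basis M = delta (Comp M)"
definition Theta :: "(mat \<Rightarrow> rat) \<Rightarrow> mat \<Rightarrow> rat" where
  "Theta = lin_ext Theta_basis"

end

theory Submission
  imports Defs
begin

definition D :: "nat list \<Rightarrow> (nat list \<times> nat list) set" where
 "D m = {(a,b). length a = length m \<and> length b = length m \<and> (\<forall>i<length m. a!i + b!i = m!i)}"

lemma D_Nil: "D [] = {([],[])}" by (auto simp: D_def)

lemma D_Cons: "D (x#m) = (\<lambda>(u,(a,b)). (u#a, (x-u)#b)) ` ({..x} \<times> D m)"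
proof
  show "D (x#m) \<subseteq> (\<lambda>(u,(a,b)). (u#a, (x-u)#b)) ` ({..x} \<times> D m)"
  proof
    fix p assume p: "p \<in> D (x#m)"
    obtain a b where pab: "p = (a,b)" by (cases p)
    from p pab obtain u a' v b' where ab: "a = u#a'" "b = v#b'"
      by (auto simp: D_def length_Suc_conv)
    from p pab ab have uv: "u + v = x" by (auto simp: D_def)
    from p pab ab have "(a',b') \<in> D m"
      by (fastforce simp: D_def)
    with uv ab pab show "p \<in> (\<lambda>(u,(a,b)). (u#a, (x-u)#b)) ` ({..x} \<times> D m)"
      by (auto intro!: image_eqI[where x="(u,(a',b'))"])
  qed
next
  show "(\<lambda>(u,(a,b)). (u#a, (x-u)#b)) ` ({..x} \<times> D m) \<subseteq> D (x#m)"
    by (auto simp: D_def nth_Cons split: nat.splits)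
qed

lemma inj_D_Cons: "inj_on (\<lambda>(u,(a,b)). (u#a, (x-u)#b)) A"
  by (auto simp: inj_on_def)

lemma finite_D: "finite (D m)"
  by (induction m) (auto simp: D_Nil D_Cons)

lemma sum_D_Cons: "(\<Sum>(a,b)\<in>D (x#m). h a b) = (\<Sum>u\<in>{..x}. \<Sum>(a,b)\<in>D m. h (u#a) ((x-u)#b))"
  apply (simp add: D_Cons sum.reindex[OF inj_D_Cons])
  apply (subst sum.cartesian_product)
  apply (simp add: case_prod_beta)
  done

lemma sum_D_append: "(\<Sum>(a,b)\<in>D (r@m). h a b) = (\<Sum>(a,b)\<in>D r. \<Sum>(c,d)\<in>D m. h (a@c) (b@d))"
proof (induction r arbitrary: h)
  case Nil then show ?case by (simp add: D_Nil)
next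
  case (Cons x r)
  show ?case by (simp add: sum_D_Cons Cons.IH)
qed

abbreviation nzf :: "nat list \<Rightarrow> nat list" where "nzf \<equiv> filter (\<lambda>x. x \<noteq> 0)"

lemma sum_D_filter: "(\<Sum>(a,b)\<in>D m. g (nzf a) (nzf b)) = (\<Sum>(a,b)\<in>D (nzf m). g (nzf a) (nzf b))"
proof (induction m arbitrary: g)
  case Nil then show ?case by simp
next
  case (Cons x m)
  have inner: "(\<Sum>(a,b)\<in>D m. g (nzf (u#a)) (nzf ((x-u)#b))) = (\<Sum>(a,b)\<in>D (nzf m). g (nzf (u#a)) (nzf ((x-u)#b)))" for u
  proof -
    have e1: "\<And>a. nzf (u#a) = (if u = 0 then nzf a else u#nzf a)" by simp
    have e2: "\<And>b. nzf ((x-u)#b) = (if x-u = 0 then nzf b else (x-u)#nzf b)" by simp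
    show ?thesis unfolding e1 e2
      using Cons.IH[of "\<lambda>p q. g (if u = 0 then p else u#p) (if x-u=0 then q else (x-u)#q)"]
      by (simp only:)
  qed
  show ?case
  proof (cases "x = 0")
    case True
    then show ?thesis using Cons.IH[of g] by (simp add: sum_D_Cons)
  next
    case False
    then have fx: "nzf (x#m) = x # nzf m" by simp
    show ?thesis unfolding fx sum_D_Cons using inner by simp
  qed
qed

fun DL :: "mat \<Rightarrow> (mat\<times>mat) set" where
  "DL [] = {([],[])}"
| "DL (r#M) = (\<lambda>((a,b),(A,B)). (a#A, b#B)) ` (D r \<times> DL M)"

lemma inj_DL: "inj_on (\<lambda>((a,b),(A,B)). (a#A, b#B)) S"
  by (auto simp: inj_on_def)

lemma finite_DL: "finite (DL M)"
  by (induction M) (auto simp: finite_D)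

lemma sum_DL: "(\<Sum>(A,B)\<in>DL M. h (concat A) (concat B)) = (\<Sum>(a,b)\<in>D (concat M). h a b)"
proof (induction M arbitrary: h)
  case Nil then show ?case by (simp add: D_Nil)
next
  case (Cons r M)
  show ?case
  proof -
    have "(\<Sum>(A,B)\<in>DL (r#M). h (concat A) (concat B))
       = (\<Sum>p\<in>D r \<times> DL M. h (fst (fst p) @ concat (fst (snd p))) (snd (fst p) @ concat (snd (snd p))))"
      unfolding DL.simps sum.reindex[OF inj_DL] comp_def by (simp add: case_prod_beta)
    also have "\<dots> = (\<Sum>p\<in>D r. \<Sum>q\<in>DL M. h (fst p @ concat (fst q)) (snd p @ concat (snd q)))"
      by (simp add: sum.cartesian_product case_prod_beta)
    also have "\<dots> = (\<Sum>p\<in>D r. \<Sum>(c,d)\<in>D (concat M). h (fst p @ c) (snd p @ d))"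
    proof (rule sum.cong[OF refl])
      fix p :: "nat list \<times> nat list"
      show "(\<Sum>q\<in>DL M. h (fst p @ concat (fst q)) (snd p @ concat (snd q))) = (\<Sum>(c,d)\<in>D (concat M). h (fst p @ c) (snd p @ d))"
        using Cons.IH[of "\<lambda>c d. h (fst p @ c) (snd p @ d)"] by (simp add: case_prod_beta)
    qed
    also have "\<dots> = (\<Sum>(a,b)\<in>D (concat (r#M)). h a b)"
      using sum_D_append[where r=r and m="concat M" and h=h] by (simp add: case_prod_beta)
    finally show ?thesis .
  qed
qed

lemma decompG_DL: "\<forall>r\<in>set M. length r = l \<Longrightarrow>
  {(A,B). is_mat (length M) l A \<and> is_mat (length M) l B \<and> (\<forall>i<length M. \<forall>j<l. A!i!j+B!i!j = M!i!j)} = DL M"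
proof (induction M)
  case Nil then show ?case by (auto simp: is_mat_def)
next
  case (Cons r M)
  have IH: "{(A,B). is_mat (length M) l A \<and> is_mat (length M) l B \<and> (\<forall>i<length M. \<forall>j<l. A!i!j+B!i!j = M!i!j)} = DL M"
    using Cons by simp
  have lr: "length r = l" using Cons.prems by simp
  show ?case
  proof
    show "{(A,B). is_mat (length (r#M)) l A \<and> is_mat (length (r#M)) l B \<and> (\<forall>i<length (r#M). \<forall>j<l. A!i!j+B!i!j = (r#M)!i!j)} \<subseteq> DL (r#M)"
    proof clarify
      fix A B assume h: "is_mat (length (r#M)) l A" "is_mat (length (r#M)) l B"
        "\<forall>i<length (r#M). \<forall>j<l. A!i!j+B!i!j = (r#M)!i!j"
      from h obtain a A' b B' where AB: "A = a#A'" "B = b#B'"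
        by (auto simp: is_mat_def length_Suc_conv)
      have "(a,b) \<in> D r" using h(1,2) h(3)[rule_format, of 0] AB lr by (auto simp: D_def is_mat_def)
      moreover have "(A',B') \<in> DL M"
      proof -
        have "\<forall>i<length M. \<forall>j<l. A'!i!j+B'!i!j = M!i!j"
          using h(3) AB by (metis Suc_less_eq length_Cons nth_Cons_Suc)
        then show ?thesis using h(1,2) AB IH[symmetric] by (auto simp: is_mat_def)
      qed
      ultimately show "(A,B) \<in> DL (r#M)" using AB by (auto intro!: image_eqI[where x="((a,b),(A',B'))"])
    qed
  next
    show "DL (r#M) \<subseteq> {(A,B). is_mat (length (r#M)) l A \<and> is_mat (length (r#M)) l B \<and> (\<forall>i<length (r#M). \<forall>j<l. A!i!j+B!i!j = (r#M)!i!j)}"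
    proof
      fix p assume "p \<in> DL (r#M)"
      then obtain a b A B where ab: "(a,b) \<in> D r" and AB: "(A,B) \<in> DL M" and p: "p = (a#A, b#B)" by auto
      from AB IH have AB': "is_mat (length M) l A" "is_mat (length M) l B" "\<forall>i<length M. \<forall>j<l. A!i!j+B!i!j = M!i!j"
        by blast+
      show "p \<in> {(A,B). is_mat (length (r#M)) l A \<and> is_mat (length (r#M)) l B \<and> (\<forall>i<length (r#M). \<forall>j<l. A!i!j+B!i!j = (r#M)!i!j)}"
        unfolding p
        using ab AB' lr by (auto simp: is_mat_def D_def nth_Cons split: nat.splits)
    qed
  qed
qed


definition Cm :: "nat list \<Rightarrow> mat" where "Cm t = (if t = [] then [] else [t])"

lemma Comp_Cm: "Comp A = Cm (nzf (concat A))"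
  by (simp add: Comp_def Cm_def Let_def)

lemma filter_nths: "(\<forall>j<length r. j \<notin> S \<longrightarrow> \<not> P (r!j)) \<Longrightarrow> filter P (nths r S) = filter P r"
proof (induction r arbitrary: S)
  case Nil then show ?case by simp
next
  case (Cons x r)
  have "\<forall>j<length r. j \<notin> {j. Suc j \<in> S} \<longrightarrow> \<not> P (r!j)"
    using Cons.prems by auto
  from Cons.IH[OF this] Cons.prems[rule_format, of 0] show ?case
    by (auto simp: nths_Cons)
qed

lemma concat_map_filter: "(\<forall>x. \<not> P x \<longrightarrow> f x = []) \<Longrightarrow> concat (map f (filter P xs)) = concat (map f xs)"
  by (induction xs) auto

lemma Comp_pk: "Comp (pk A) = Comp A"
proof -
  let ?S = "{j. \<exists>r'\<in>set A. j < length r' \<and> r' ! j \<noteq> 0}"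
  have "nzf (concat (pk A)) = concat (map (\<lambda>r. nzf (nths r ?S)) (filter nonzero_row A))"
    by (simp add: pk_def filter_concat o_def)
  also have "\<dots> = concat (map nzf (filter nonzero_row A))"
  proof -
    have "\<forall>r\<in>set (filter nonzero_row A). nzf (nths r ?S) = nzf r"
      by (auto intro!: filter_nths)
    then show ?thesis by (metis (no_types, lifting) map_eq_conv)
  qed
  also have "\<dots> = concat (map nzf A)"
    by (rule concat_map_filter) (auto simp: nonzero_row_def filter_empty_conv)
  also have "\<dots> = nzf (concat A)" by (simp add: filter_concat)
  finally show ?thesis by (simp add: Comp_Cm)
qed

lemma pk_row: "pk [a] = Cm (nzf a)"
proof -
  let ?S = "{j. j < length a \<and> a ! j \<noteq> 0}"
  have S: "{j. \<exists>r'\<in>set [a]. j < length r' \<and> r' ! j \<noteq> 0} = ?S" by auto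
  have "nzf (nths a ?S) = nzf a" by (rule filter_nths) auto
  moreover have "nzf (nths a ?S) = nths a ?S"
    by (auto simp: filter_id_conv set_nths)
  ultimately have e: "nths a ?S = nzf a" by simp
  have "nonzero_row a \<longleftrightarrow> nzf a \<noteq> []" by (auto simp: nonzero_row_def filter_empty_conv)
  then show ?thesis using e by (simp add: pk_def S Cm_def)
qed

lemma decomp_row: "decomp [s] = (\<lambda>(a,b). ([a],[b])) ` D s"
proof
  show "decomp [s] \<subseteq> (\<lambda>(a,b). ([a],[b])) ` D s"
  proof
    fix p assume p: "p \<in> decomp [s]"
    then obtain A B where pAB: "p = (A,B)" by (cases p)
    with p obtain a b where ab: "A = [a]" "B = [b]"
      by (auto simp: decomp_def is_mat_def length_Suc_conv)
    with p pAB have "(a,b) \<in> D s" by (auto simp: decomp_def is_mat_def D_def ncols_def)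
    with pAB ab show "p \<in> (\<lambda>(a,b). ([a],[b])) ` D s" by auto
  qed
next
  show "(\<lambda>(a,b). ([a],[b])) ` D s \<subseteq> decomp [s]"
    by (auto simp: decomp_def is_mat_def D_def ncols_def)
qed

lemma packed_rows: "packed M \<Longrightarrow> \<forall>r\<in>set M. length r = ncols M"
  by (auto simp: packed_def is_mat_def)

lemma decomp_DL: "packed M \<Longrightarrow> decomp M = DL M"
  unfolding decomp_def using decompG_DL[OF packed_rows] by simp

lemma finite_decomp: "packed M \<Longrightarrow> finite (decomp M)"
  by (simp add: decomp_DL finite_DL)

lemma packed_Comp_Nil: "packed M \<Longrightarrow> Comp M = [] \<longleftrightarrow> M = []"
proof
  assume p: "packed M" and c: "Comp M = []"
  show "M = []"
  proof (rule ccontr)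
    assume "M \<noteq> []"
    then obtain r M' where "M = r # M'" by (cases M) auto
    with p obtain x where "x \<in> set r" "x \<noteq> 0" by (auto simp: packed_def nonzero_row_def)
    with \<open>M = r # M'\<close> have "nzf (concat M) \<noteq> []" by (auto simp: filter_empty_conv)
    with c show False by (simp add: Comp_def Let_def split: if_splits)
  qed
qed (simp add: Comp_def)

lemma packed1_Comp: "packed1 (Comp M)"
proof (cases "nzf (concat M) = []")
  case True then show ?thesis by (simp add: Comp_def packed1_def packed_def is_mat_def ncols_def)
next
  case False
  then show ?thesis
    by (auto simp: Comp_def packed1_def packed_def is_mat_def ncols_def nonzero_row_def Let_def
        filter_empty_conv dest: nth_mem)
qed

lemma Comp_dsum: "Comp (dsum A B) = conc (Comp A) (Comp B)"
  by (simp add: Comp_def dsum_def conc_def Let_def filter_concat o_def)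

lemma coprod_basis:
  assumes "packed M"
  shows "(\<Sum>(A,B)\<in>decomp M. Theta_basis (pk A) t1 * Theta_basis (pk B) t2) = cop_basis (Comp M) (t1,t2)"
proof (cases "M = []")
  case True
  have "decomp [] = {([],[])}" by (auto simp: decomp_def is_mat_def)
  then show ?thesis using True
    by (simp add: cop_basis_def Theta_basis_def Comp_def pk_def delta_def)
next
  case False
  let ?s = "nzf (concat M)"
  have CM: "Comp M = [?s]" using False packed_Comp_Nil[OF assms]
    by (auto simp: Comp_def Let_def split: if_splits)
  define g where "g = (\<lambda>x y. delta (Cm x) t1 * delta (Cm y) t2)"
  have "(\<Sum>(A,B)\<in>decomp M. Theta_basis (pk A) t1 * Theta_basis (pk B) t2)
      = (\<Sum>(A,B)\<in>DL M. g (nzf (concat A)) (nzf (concat B)))"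
    unfolding decomp_DL[OF assms] Theta_basis_def Comp_pk by (simp add: Comp_Cm g_def)
  also have "\<dots> = (\<Sum>(a,b)\<in>D (concat M). g (nzf a) (nzf b))"
    by (rule sum_DL)
  also have "\<dots> = (\<Sum>(a,b)\<in>D ?s. g (nzf a) (nzf b))"
    by (rule sum_D_filter)
  also have "\<dots> = (\<Sum>(A,B)\<in>decomp [?s]. delta (pk A, pk B) (t1,t2))"
  proof -
    have inj: "inj_on (\<lambda>(a,b). ([a],[b])) (D ?s)" by (auto simp: inj_on_def)
    show ?thesis unfolding decomp_row sum.reindex[OF inj] comp_def
      by (auto simp: case_prod_beta pk_row g_def delta_def intro!: sum.cong)
  qed
  finally show ?thesis by (simp add: CM cop_basis_def)
qed


definition comb :: "'i set \<Rightarrow> ('i \<Rightarrow> rat) \<Rightarrow> ('i \<Rightarrow> 'a) \<Rightarrow> 'a \<Rightarrow> rat" where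
  "comb I w e = (\<lambda>c. \<Sum>i\<in>I. w i * delta (e i) c)"

lemma supp_comb: "supp (comb I w e) \<subseteq> e ` I"
proof
  fix c assume "c \<in> supp (comb I w e)"
  then have "(\<Sum>i\<in>I. w i * delta (e i) c) \<noteq> 0" by (simp add: supp_def comb_def)
  then obtain i where "i \<in> I" "w i * delta (e i) c \<noteq> 0" by (meson sum.neutral)
  then show "c \<in> e ` I" by (auto simp: delta_def split: if_splits)
qed

lemma lin_ext_superset:
  assumes "finite S" "supp x \<subseteq> S"
  shows "lin_ext f x c = (\<Sum>a\<in>S. x a * f a c)"
  unfolding lin_ext_def
  by (rule sum.mono_neutral_left) (use assms in \<open>auto simp: supp_def\<close>)

lemma collapse: "finite S \<Longrightarrow> a \<in> S \<Longrightarrow> (\<Sum>d\<in>S. delta a d * g d) = g a"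
  by (simp add: delta_def if_distrib[of "\<lambda>z. z * _"] cong: if_cong)

lemma lin_ext_comb:
  assumes "finite I"
  shows "lin_ext f (comb I w e) c = (\<Sum>i\<in>I. w i * f (e i) c)"
proof -
  have "lin_ext f (comb I w e) c = (\<Sum>d\<in>e ` I. comb I w e d * f d c)"
    by (rule lin_ext_superset) (use assms supp_comb[of I w e] in auto)
  also have "\<dots> = (\<Sum>d\<in>e ` I. \<Sum>i\<in>I. w i * (delta (e i) d * f d c))"
    by (simp add: comb_def sum_distrib_right mult.assoc)
  also have "\<dots> = (\<Sum>i\<in>I. w i * (\<Sum>d\<in>e ` I. delta (e i) d * f d c))"
    by (subst sum.swap) (simp add: sum_distrib_left)
  also have "\<dots> = (\<Sum>i\<in>I. w i * f (e i) c)"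
    using assms by (simp add: collapse)
  finally show ?thesis .
qed

lemma comb_self: "finite (supp x) \<Longrightarrow> comb (supp x) x id = x"
proof
  fix c assume f: "finite (supp x)"
  show "comb (supp x) x id c = x c"
  proof (cases "c \<in> supp x")
    case True
    have "(\<Sum>a\<in>supp x. x a * delta a c) = (\<Sum>a\<in>supp x. if a = c then x c else 0)"
      by (rule sum.cong) (auto simp: delta_def)
    then show ?thesis using f True by (simp add: comb_def)
  next
    case False
    have "(\<Sum>a\<in>supp x. x a * delta a c) = 0"
      by (rule sum.neutral) (use False in \<open>auto simp: delta_def\<close>)
    then show ?thesis using False by (simp add: comb_def supp_def)
  qed
qed

lemma bilin_as_lin: "bilin_ext m x y = lin_ext (\<lambda>a. lin_ext (\<lambda>b. delta (m a b)) y) x"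
  by (simp add: bilin_ext_def lin_ext_def sum_distrib_left mult.assoc)

lemma Theta_comb: "Theta x = comb (supp x) x Comp"
  by (simp add: Theta_def lin_ext_def Theta_basis_def comb_def fun_eq_iff)

lemma HPack_fin: "x \<in> HPack \<Longrightarrow> finite (supp x)"
  by (simp add: HPack_def vspace_def)

lemma HPack_packed: "x \<in> HPack \<Longrightarrow> a \<in> supp x \<Longrightarrow> packed a"
  by (simp add: HPack_def vspace_def supp_def)

lemma part1: "x \<in> HPack \<Longrightarrow> Theta x \<in> HPack1"
proof -
  assume x: "x \<in> HPack"
  have s: "supp (Theta x) \<subseteq> Comp ` supp x" unfolding Theta_comb by (rule supp_comb)
  then have "finite (supp (Theta x))" using HPack_fin[OF x] finite_surj by blast
  moreover have "\<forall>a. Theta x a \<noteq> 0 \<longrightarrow> packed1 a"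
    using s packed1_Comp by (auto simp: supp_def)
  ultimately show ?thesis by (simp add: HPack1_def vspace_def)
qed

lemma bilin_comb:
  assumes "finite I" "finite J"
  shows "bilin_ext m (comb I w e) (comb J v g) c = (\<Sum>i\<in>I. w i * (\<Sum>j\<in>J. v j * delta (m (e i) (g j)) c))"
  unfolding bilin_as_lin using assms by (simp add: lin_ext_comb)

lemma part2:
  assumes x: "x \<in> HPack" and y: "y \<in> HPack"
  shows "Theta (prodPack x y) = prodPack1 (Theta x) (Theta y)"
proof
  fix c
  have fx: "finite (supp x)" and fy: "finite (supp y)" using x y by (auto intro: HPack_fin)
  have P: "prodPack x y = comb (supp x \<times> supp y) (\<lambda>(a,b). x a * y b) (\<lambda>(a,b). dsum a b)"
  proof
    fix d
    have "prodPack x y d = bilin_ext dsum (comb (supp x) x id) (comb (supp y) y id) d"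
      by (simp add: prodPack_def comb_self fx fy)
    also have "\<dots> = (\<Sum>a\<in>supp x. x a * (\<Sum>b\<in>supp y. y b * delta (dsum a b) d))"
      by (simp add: bilin_comb fx fy)
    also have "\<dots> = comb (supp x \<times> supp y) (\<lambda>(a,b). x a * y b) (\<lambda>(a,b). dsum a b) d"
      by (auto simp: comb_def sum.cartesian_product sum_distrib_left mult.assoc intro!: sum.cong)
    finally show "prodPack x y d = \<dots>" .
  qed
  have "Theta (prodPack x y) c = (\<Sum>(a,b)\<in>supp x \<times> supp y. x a * y b * delta (Comp (dsum a b)) c)"
    unfolding P Theta_def using fx fy by (simp add: lin_ext_comb Theta_basis_def case_prod_beta)
  also have "\<dots> = (\<Sum>a\<in>supp x. x a * (\<Sum>b\<in>supp y. y b * delta (conc (Comp a) (Comp b)) c))"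
    by (simp add: Comp_dsum sum.cartesian_product sum_distrib_left mult.assoc)
  also have "\<dots> = prodPack1 (Theta x) (Theta y) c"
    unfolding Theta_comb prodPack1_def using fx fy by (simp add: bilin_comb)
  finally show "Theta (prodPack x y) c = prodPack1 (Theta x) (Theta y) c" .
qed

lemma supp_delta: "supp (delta a) = {a}"
  by (auto simp: supp_def delta_def)

lemma part3: "Theta unit_elt = unit_elt"
  unfolding Theta_def unit_elt_def lin_ext_def supp_delta Theta_basis_def
  by (simp add: Comp_def delta_def fun_eq_iff)

lemma part5: "x \<in> HPack \<Longrightarrow> counit (Theta x) = counit x"
proof -
  assume x: "x \<in> HPack"
  have "counit (Theta x) = (\<Sum>a\<in>supp x. x a * delta (Comp a) [])"
    by (simp add: counit_def Theta_comb comb_def)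
  also have "\<dots> = (\<Sum>a\<in>supp x. if a = [] then x [] else 0)"
  proof (rule sum.cong[OF refl])
    fix a assume "a \<in> supp x"
    from packed_Comp_Nil[OF HPack_packed[OF x this]]
    show "x a * delta (Comp a) [] = (if a = [] then x [] else 0)"
      by (auto simp: delta_def)
  qed
  also have "\<dots> = x []" using HPack_fin[OF x] by (simp add: supp_def)
  finally show ?thesis by (simp add: counit_def)
qed

lemma part4:
  assumes x: "x \<in> HPack"
  shows "tensor_map Theta_basis Theta_basis (copPack x) = copPack1 (Theta x)"
proof
  fix t :: "mat \<times> mat"
  obtain t1 t2 where t: "t = (t1,t2)" by (cases t)
  have fx: "finite (supp x)" using x by (rule HPack_fin)
  have fd: "finite (decomp M)" if "M \<in> supp x" for M
    using finite_decomp HPack_packed[OF x that] .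
  let ?I = "Sigma (supp x) decomp"
  have fI: "finite ?I" using fx fd by auto
  have C: "copPack x = comb ?I (\<lambda>(M,q). x M) (\<lambda>(M,(A,B)). (pk A, pk B))"
  proof
    fix p
    have "copPack x p = lin_ext cop_basis (comb (supp x) x id) p"
      by (simp add: copPack_def comb_self fx)
    also have "\<dots> = (\<Sum>M\<in>supp x. x M * (\<Sum>q\<in>decomp M. delta (pk (fst q), pk (snd q)) p))"
      using fx by (simp add: lin_ext_comb cop_basis_def case_prod_beta)
    also have "\<dots> = (\<Sum>M\<in>supp x. \<Sum>q\<in>decomp M. x M * delta (pk (fst q), pk (snd q)) p)"
      by (simp add: sum_distrib_left)
    also have "\<dots> = (\<Sum>z\<in>?I. x (fst z) * delta (pk (fst (snd z)), pk (snd (snd z))) p)"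
      using fx fd by (subst sum.Sigma) (auto simp: case_prod_beta)
    also have "\<dots> = comb ?I (\<lambda>(M,q). x M) (\<lambda>(M,(A,B)). (pk A, pk B)) p"
      by (simp add: comb_def case_prod_beta)
    finally show "copPack x p = \<dots>" .
  qed
  have "tensor_map Theta_basis Theta_basis (copPack x) t
     = (\<Sum>z\<in>?I. x (fst z) * (Theta_basis (pk (fst (snd z))) t1 * Theta_basis (pk (snd (snd z))) t2))"
    unfolding C tensor_map_def t using fI by (simp add: lin_ext_comb case_prod_beta)
  also have "\<dots> = (\<Sum>M\<in>supp x. \<Sum>q\<in>decomp M. x M * (Theta_basis (pk (fst q)) t1 * Theta_basis (pk (snd q)) t2))"
    using fx fd by (subst sum.Sigma) (auto simp: case_prod_beta)
  also have "\<dots> = (\<Sum>M\<in>supp x. x M * cop_basis (Comp M) (t1,t2))"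
  proof (rule sum.cong[OF refl])
    fix M assume M: "M \<in> supp x"
    show "(\<Sum>q\<in>decomp M. x M * (Theta_basis (pk (fst q)) t1 * Theta_basis (pk (snd q)) t2)) = x M * cop_basis (Comp M) (t1,t2)"
      using coprod_basis[OF HPack_packed[OF x M], of t1 t2]
      by (simp add: sum_distrib_left[symmetric] case_prod_beta)
  qed
  also have "\<dots> = copPack1 (Theta x) t"
    unfolding copPack1_def Theta_comb t using fx by (simp add: lin_ext_comb)
  finally show "tensor_map Theta_basis Theta_basis (copPack x) t = copPack1 (Theta x) t" .
qed

theorem mainTheorem4:
  shows "(\<forall>x\<in>HPack. Theta x \<in> HPack1)
    \<and> (\<forall>x\<in>HPack. \<forall>y\<in>HPack. Theta (prodPack x y) = prodPack1 (Theta x) (Theta y))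
    \<and> Theta unit_elt = unit_elt
    \<and> (\<forall>x\<in>HPack. tensor_map Theta_basis Theta_basis (copPack x) = copPack1 (Theta x))
    \<and> (\<forall>x\<in>HPack. counit (Theta x) = counit x)"
  using part1 part2 part3 part4 part5 by blast

end
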